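(* There exists a finite set of points $X \subset \mathbb{R}^2$ together with a point $x \in X$ and a noncrossing tour $T$ through $X \setminus \{x\}$ (i.e., through all but one of the points) such that every noncrossing tour through all points of $X$ has length strictly less than $\ell(T)$.
   Context: For a finite set of points in $\mathbb{R}^2$, a tour is a Hamiltonian cycle on them; the length of an edge $\{a,b\}$ is the Euclidean distance $d(a,b)$ and $\ell(T)$ is the sum of the edge lengths of $T$. For an edge $e=\{a,b\}$, $L(e)$ denotes the closed line segment from $a$ to $b$. A tour is noncrossing if no two of its edges have intersecting line segments (other than at a shared endpoint). *)

theory Defs
  imports "HOL-Analysis.Analysis"
begin

type_synonym point = "real^2"

definition is_tour :: "point set \<Rightarrow> point list \<Rightarrow> bool" where
  "is_tour X xs \<longleftrightarrow> distinct xs \<and> set xs = X \<and> length xs \<ge> 3"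

definition tour_edges :: "point list \<Rightarrow> point set set" where
  "tour_edges xs = {{xs ! i, xs ! ((i + 1) mod length xs)} | i. i < length xs}"

definition seg :: "point set \<Rightarrow> point set" where
  "seg e = \<Union>{closed_segment a b | a b. e = {a, b}}"

definition edge_len :: "point set \<Rightarrow> real" where
  "edge_len e = (THE d. \<exists>a b. e = {a, b} \<and> d = dist a b)"

definition tour_length :: "point list \<Rightarrow> real" where
  "tour_length xs = (\<Sum>e\<in>tour_edges xs. edge_len e)"

definition noncrossing :: "point list \<Rightarrow> bool" where
  "noncrossing xs \<longleftrightarrow> (\<forall>e\<in>tour_edges xs. \<forall>f\<in>tour_edges xs. e \<noteq> f \<longrightarrow> seg e \<inter> seg f \<subseteq> e \<inter> f)"

end

theory Submission
  imports Defs
begin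


lemma dist2: "dist (x::real^2) y = sqrt ((x$1 - y$1)^2 + (x$2 - y$2)^2)"
  unfolding dist_vec_def L2_set_def by (simp add: sum_2 dist_real_def)

lemma vec2_eq: "(x::real^2) = y \<longleftrightarrow> x$1 = y$1 \<and> x$2 = y$2"
  by (simp add: vec_eq_iff forall_2)

lemma sqrt_le_helper: "0 \<le> b \<Longrightarrow> a \<le> b^2 \<Longrightarrow> sqrt a \<le> (b::real)"
  by (metis real_sqrt_le_mono real_sqrt_unique)

lemma sqrt_ge_helper: "0 \<le> b \<Longrightarrow> b^2 \<le> a \<Longrightarrow> b \<le> sqrt (a::real)"
  using real_le_rsqrt by blast

lemma seg_pair: "seg {a,b} = closed_segment a b"
  unfolding seg_def
  by (auto simp: doubleton_eq_iff closed_segment_commute)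

lemma conv_lt:
  fixes A B k u :: real
  assumes "A < k" "B < k" "0 \<le> u" "u \<le> 1"
  shows "(1-u)*A + u*B < k"
proof -
  have "(1-u)*A \<le> (1-u)*max A B" by (rule mult_left_mono) (use assms in auto)
  moreover have "u*B \<le> u*max A B" by (rule mult_left_mono) (use assms in auto)
  ultimately have "(1-u)*A + u*B \<le> max A B" by (simp add: algebra_simps)
  thus ?thesis using assms by linarith
qed

lemma conv_gt:
  fixes A B k u :: real
  assumes "A > k" "B > k" "0 \<le> u" "u \<le> 1"
  shows "(1-u)*A + u*B > k"
  using conv_lt[of "-A" "-k" "-B" u] assms by (simp add: algebra_simps)

lemma sep:
  fixes a b c d :: "real^2" and wa wb k :: real
  assumes "wa*a$1+wb*a$2 < k" "wa*b$1+wb*b$2 < k" "wa*c$1+wb*c$2 > k" "wa*d$1+wb*d$2 > k"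
  shows "closed_segment a b \<inter> closed_segment c d = {}"
proof -
  have L: "wa*z$1+wb*z$2 < k" if "z \<in> closed_segment a b" for z
  proof -
    have "\<exists>u. 0 \<le> u \<and> u \<le> 1 \<and> z = (1 - u) *\<^sub>R a + u *\<^sub>R b"
      using that by (simp only: in_segment)
    then obtain u where u: "0 \<le> u" "u \<le> 1" "z = (1-u) *\<^sub>R a + u *\<^sub>R b"
      by blast
    have "wa*z$1+wb*z$2 = (1-u)*(wa*a$1+wb*a$2) + u*(wa*b$1+wb*b$2)"
      unfolding u(3) by (simp add: algebra_simps)
    also have "\<dots> < k" using assms(1,2) u(1,2)
      by (intro conv_lt) auto
    finally show ?thesis .
  qed
  have R: "wa*z$1+wb*z$2 > k" if "z \<in> closed_segment c d" for z
  proof -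
    have "\<exists>u. 0 \<le> u \<and> u \<le> 1 \<and> z = (1 - u) *\<^sub>R c + u *\<^sub>R d"
      using that by (simp only: in_segment)
    then obtain u where u: "0 \<le> u" "u \<le> 1" "z = (1-u) *\<^sub>R c + u *\<^sub>R d"
      by blast
    have "wa*z$1+wb*z$2 = (1-u)*(wa*c$1+wb*c$2) + u*(wa*d$1+wb*d$2)"
      unfolding u(3) by (simp add: algebra_simps)
    also have "\<dots> > k" using assms(3,4) u(1,2)
      by (intro conv_gt) auto
    finally show ?thesis .
  qed
  show ?thesis using L R by fastforce
qed

lemma adj:
  fixes a b c :: "real^2"
  assumes "(a$1-c$1)*(b$2-c$2) \<noteq> (a$2-c$2)*(b$1-c$1)"
  shows "closed_segment c a \<inter> closed_segment c b \<subseteq> {c}"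
proof
  fix z assume "z \<in> closed_segment c a \<inter> closed_segment c b"
  hence z1: "z \<in> closed_segment c a" and z2: "z \<in> closed_segment c b" by auto
  have "\<exists>u. 0 \<le> u \<and> u \<le> 1 \<and> z = (1 - u) *\<^sub>R c + u *\<^sub>R a"
    using z1 by (simp only: in_segment)
  then obtain s where s: "z = (1-s) *\<^sub>R c + s *\<^sub>R a" by blast
  have "\<exists>u. 0 \<le> u \<and> u \<le> 1 \<and> z = (1 - u) *\<^sub>R c + u *\<^sub>R b"
    using z2 by (simp only: in_segment)
  then obtain t where t: "z = (1-t) *\<^sub>R c + t *\<^sub>R b" by blast
  have E: "(1-s) *\<^sub>R c + s *\<^sub>R a = (1-t) *\<^sub>R c + t *\<^sub>R b" using s t by simp
  have e1: "s*(a$1-c$1) = t*(b$1-c$1)"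
    using arg_cong[OF E, of "\<lambda>v. v$1"] by (simp add: algebra_simps)
  have e2: "s*(a$2-c$2) = t*(b$2-c$2)"
    using arg_cong[OF E, of "\<lambda>v. v$2"] by (simp add: algebra_simps)
  have "s*((a$1-c$1)*(b$2-c$2) - (a$2-c$2)*(b$1-c$1)) = (s*(a$1-c$1))*(b$2-c$2) - (s*(a$2-c$2))*(b$1-c$1)"
    by (simp add: algebra_simps)
  also have "\<dots> = 0" unfolding e1 e2 by simp
  finally have "s*((a$1-c$1)*(b$2-c$2) - (a$2-c$2)*(b$1-c$1)) = 0" .
  hence "s = 0" using assms by simp
  thus "z \<in> {c}" using s by simp
qed

lemma tour_edges_image:
  "tour_edges xs = (\<lambda>i. {xs!i, xs!((i+1) mod length xs)}) ` {..<length xs}"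
  unfolding tour_edges_def by auto

lemma edge_len_pair: "edge_len {a,b} = dist a b"
  unfolding edge_len_def
proof (rule the_equality)
  show "\<exists>c d. {a, b} = {c, d} \<and> dist a b = dist c d" by blast
next
  fix r assume "\<exists>c d. {a, b} = {c, d} \<and> r = dist c d"
  then obtain c d where "{a,b} = {c,d}" "r = dist c d" by blast
  thus "r = dist a b" by (auto simp: doubleton_eq_iff dist_commute)
qed

lemma edge_len_nonneg: "edge_len {a,b} \<ge> 0"
  by (simp add: edge_len_pair)

lemma sum_nth_set:
  assumes "distinct ys"
  shows "(\<Sum>i<length ys. f (ys!i)) = sum f (set ys)"
proof -
  have "(\<Sum>i<length ys. f (ys!i)) = (\<Sum>i<length ys. (map f ys)!i)" by simp
  also have "\<dots> = sum_list (map f ys)" by (simp add: sum_list_sum_nth atLeast0LessThan)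
  also have "\<dots> = sum f (set ys)" using assms by (simp add: sum_list_distinct_conv_sum_set)
  finally show ?thesis .
qed

lemma sum_shift:
  assumes "distinct xs"
  shows "(\<Sum>i<length xs. f (xs!((i+1) mod length xs))) = sum f (set xs)"
proof -
  have "(\<Sum>i<length xs. f (xs!((i+1) mod length xs))) = (\<Sum>i<length (rotate1 xs). f (rotate1 xs!i))"
    by (intro sum.cong) (auto simp: nth_rotate1)
  also have "\<dots> = sum f (set (rotate1 xs))" using assms by (intro sum_nth_set) simp
  finally show ?thesis by simp
qed

lemma edges_inj:
  assumes "distinct xs" "length xs \<ge> 3"
  shows "inj_on (\<lambda>i. {xs!i, xs!((i+1) mod length xs)}) {..<length xs}"
proof
  fix i j assume i: "i \<in> {..<length xs}" and j: "j \<in> {..<length xs}"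
    and eq: "{xs!i, xs!((i+1) mod length xs)} = {xs!j, xs!((j+1) mod length xs)}"
  let ?n = "length xs"
  have n0: "?n > 0" using assms(2) by linarith
  have mi: "(i+1) mod ?n < ?n" and mj: "(j+1) mod ?n < ?n" using n0 by simp_all
  have inj: "\<And>a b. a < ?n \<Longrightarrow> b < ?n \<Longrightarrow> xs!a = xs!b \<Longrightarrow> a = b"
    using assms(1) nth_eq_iff_index_eq by blast
  show "i = j"
  proof (rule ccontr)
    assume ne: "i \<noteq> j"
    hence "xs!i \<noteq> xs!j" using inj i j by auto
    hence "xs!i = xs!((j+1) mod ?n) \<and> xs!((i+1) mod ?n) = xs!j" using eq by (auto simp: doubleton_eq_iff)
    hence a: "i = (j+1) mod ?n" and b: "(i+1) mod ?n = j" using inj i j mi mj by auto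
    have il: "i < ?n" and jl: "j < ?n" using i j by auto
    have ci: "(i+1) mod ?n = (if i+1 < ?n then i+1 else 0)"
    proof (cases "i+1 < ?n")
      case False hence "i+1 = ?n" using il by linarith
      thus ?thesis by simp
    qed simp
    have cj: "(j+1) mod ?n = (if j+1 < ?n then j+1 else 0)"
    proof (cases "j+1 < ?n")
      case False hence "j+1 = ?n" using jl by linarith
      thus ?thesis by simp
    qed simp
    show False
    proof (cases "i+1 < ?n")
      case T1: True
      show False
      proof (cases "j+1 < ?n")
        case True
        then show ?thesis using a b ci cj T1 assms(2) by simp
      next
        case False
        then show ?thesis using a b ci cj T1 assms(2) by simp
      qed
    next
      case F1: False
      show False
      proof (cases "j+1 < ?n")
        case True
        then show ?thesis using a b ci cj F1 assms(2) by simp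
      next
        case False
        then show ?thesis using a b ci cj F1 il jl assms(2) by simp
      qed
    qed
  qed
qed

lemma tour_length_eq:
  assumes "distinct xs" "length xs \<ge> 3"
  shows "tour_length xs = (\<Sum>i<length xs. dist (xs!i) (xs!((i+1) mod length xs)))"
  unfolding tour_length_def tour_edges_image
  by (subst sum.reindex[OF edges_inj[OF assms]]) (simp add: edge_len_pair)

lemma blocked:
  assumes nc: "noncrossing xs" and e: "{a,b} \<in> tour_edges xs" and c: "c \<in> set xs"
    and cn: "c \<noteq> a" "c \<noteq> b" and cs: "c \<in> closed_segment a b"
  shows False
proof -
  obtain j where j: "j < length xs" "xs!j = c" using c by (auto simp: in_set_conv_nth)
  let ?f = "{xs!j, xs!((j+1) mod length xs)}"
  have f: "?f \<in> tour_edges xs" unfolding tour_edges_def using j by auto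
  have ne: "{a,b} \<noteq> ?f" using j cn by auto
  have c1: "c \<in> seg ?f" unfolding seg_pair using j by simp
  have c2: "c \<in> seg {a,b}" unfolding seg_pair using cs .
  have H: "\<forall>e\<in>tour_edges xs. \<forall>f\<in>tour_edges xs. e\<noteq>f \<longrightarrow> seg e \<inter> seg f \<subseteq> e \<inter> f"
    using nc unfolding noncrossing_def .
  note HH = H[rule_format, OF e f ne]
  have "c \<in> {a,b} \<inter> ?f" using HH c1 c2 by blast
  thus False using cn by auto
qed



definition xo :: "real^2" where "xo = vector [0, 0]"
lemma xo_c [simp]: "xo$1 = 0" "xo$2 = 0" by (simp_all add: xo_def)
definition p1 :: "real^2" where "p1 = vector [1, 0]"
lemma p1_c [simp]: "p1$1 = 1" "p1$2 = 0" by (simp_all add: p1_def)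
definition p2 :: "real^2" where "p2 = vector [0, 1]"
lemma p2_c [simp]: "p2$1 = 0" "p2$2 = 1" by (simp_all add: p2_def)
definition p3 :: "real^2" where "p3 = vector [-1, -1]"
lemma p3_c [simp]: "p3$1 = -1" "p3$2 = -1" by (simp_all add: p3_def)
definition q1 :: "real^2" where "q1 = vector [1000, 0]"
lemma q1_c [simp]: "q1$1 = 1000" "q1$2 = 0" by (simp_all add: q1_def)
definition q2 :: "real^2" where "q2 = vector [0, 1000]"
lemma q2_c [simp]: "q2$1 = 0" "q2$2 = 1000" by (simp_all add: q2_def)
definition q3 :: "real^2" where "q3 = vector [-1000, -1000]"
lemma q3_c [simp]: "q3$1 = -1000" "q3$2 = -1000" by (simp_all add: q3_def)

lemma pts_ne [simp]: "xo \<noteq> p1" "p1 \<noteq> xo" "xo \<noteq> p2" "p2 \<noteq> xo" "xo \<noteq> p3" "p3 \<noteq> xo" "xo \<noteq> q1" "q1 \<noteq> xo" "xo \<noteq> q2" "q2 \<noteq> xo" "xo \<noteq> q3" "q3 \<noteq> xo" "p1 \<noteq> p2" "p2 \<noteq> p1" "p1 \<noteq> p3" "p3 \<noteq> p1" "p1 \<noteq> q1" "q1 \<noteq> p1" "p1 \<noteq> q2" "q2 \<noteq> p1" "p1 \<noteq> q3" "q3 \<noteq> p1" "p2 \<noteq> p3" "p3 \<noteq> p2" "p2 \<noteq> q1" "q1 \<noteq> p2" "p2 \<noteq> q2" "q2 \<noteq> p2" "p2 \<noteq> q3" "q3 \<noteq> p2" "p3 \<noteq> q1" "q1 \<noteq>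 p3" "p3 \<noteq> q2" "q2 \<noteq> p3" "p3 \<noteq> q3" "q3 \<noteq> p3" "q1 \<noteq> q2" "q2 \<noteq> q1" "q1 \<noteq> q3" "q3 \<noteq> q1" "q2 \<noteq> q3" "q3 \<noteq> q2"
  by (simp_all add: vec2_eq)
definition W :: "real^2 \<Rightarrow> real" where "W v = (if v = q1 \<or> v = q2 then 911 else if v = q3 then 1326 else if v = xo then -87 else 89)"
lemma W_vals [simp]: "W xo = -87" "W p1 = 89" "W p2 = 89" "W p3 = 89" "W q1 = 911" "W q2 = 911" "W q3 = 1326"
  by (simp_all add: W_def)
lemma pair_bounds: "dist xo p1 \<le> 4" "dist xo p2 \<le> 4" "dist xo p3 \<le> 4" "dist p1 xo \<le> 4" "dist p1 p2 \<le> 180" "dist p1 p3 \<le> 180" "dist p1 q1 \<le> 1002" "dist p1 q2 \<le> 1002" "dist p1 q3 \<le> 1417" "dist p2 xo \<le> 4" "dist p2 p1 \<le> 180" "dist p2 p3 \<le> 180" "dist p2 q1 \<le> 1002" "dist p2 q2 \<le> 1002" "dist p2 q3 \<le> 1417" "dist p3 xo \<le> 4" "dist p3 p1 \<le> 180" "dist p3 p2 \<le> 180" "dist p3 q1 \<le> 1002" "dist p3 q2 \<le> 1002" "dist p3 q3 \<le> 1417" "dist q1 p1 \<le> 1002" "dist q1 p2 \<le> 1002" "dist q1 p3 \<le> 1002" "dist q1 q2 \<le> 1824" "dist q1 q3 \<le> 2239" "dist q2 p1 \<le> 1002" "dist q2 p2 \<le> 1002" "dist q2 p3 \<le> 1002"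 "dist q2 q1 \<le> 1824" "dist q2 q3 \<le> 2239" "dist q3 p1 \<le> 1417" "dist q3 p2 \<le> 1417" "dist q3 p3 \<le> 1417" "dist q3 q1 \<le> 2239" "dist q3 q2 \<le> 2239"
  by (simp_all add: dist2 sqrt_le_helper power2_eq_square)
definition Xs :: "(real^2) set" where "Xs = {xo,p1,p2,p3,q1,q2,q3}"

lemma edge_bound:
  assumes "u \<in> Xs" "v \<in> Xs" "u \<noteq> v" "\<not>(u = xo \<and> v \<in> {q1,q2,q3})" "\<not>(v = xo \<and> u \<in> {q1,q2,q3})"
  shows "dist u v \<le> W u + W v + 2"
  using assms pair_bounds unfolding Xs_def by auto

lemma on_segs: "p1 \<in> closed_segment xo q1" "p2 \<in> closed_segment xo q2" "p3 \<in> closed_segment xo q3"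
  unfolding in_segment by (rule exI[of _ "1/1000"], simp add: vec2_eq)+

lemma card_Xs: "card Xs = 7"
  unfolding Xs_def by simp

lemma sum_W: "sum W Xs = 3328"
  unfolding Xs_def by simp

lemma upper:
  assumes t: "is_tour Xs T'" and nc: "noncrossing T'"
  shows "tour_length T' \<le> 6670"
proof -
  let ?n = "length T'"
  have d: "distinct T'" and s: "set T' = Xs" and l3: "?n \<ge> 3" using t unfolding is_tour_def by auto
  have n7: "?n = 7" using distinct_card[OF d] s card_Xs by simp
  have bound: "dist (T'!i) (T'!((i+1) mod ?n)) \<le> W (T'!i) + W (T'!((i+1) mod ?n)) + 2"
    if i: "i < ?n" for i
  proof -
    let ?a = "T'!i" and ?b = "T'!((i+1) mod ?n)"
    have mi: "(i+1) mod ?n < ?n" using n7 by simp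
    have a: "?a \<in> Xs" using i s by auto
    have b: "?b \<in> Xs" using mi s by auto
    have "i \<noteq> (i+1) mod ?n"
    proof (cases "i+1 < ?n")
      case True thus ?thesis by simp
    next
      case False hence "i+1 = ?n" using i by linarith
      thus ?thesis using l3 by simp
    qed
    hence ab: "?a \<noteq> ?b" using d i mi nth_eq_iff_index_eq by blast
    have e: "{?a, ?b} \<in> tour_edges T'" unfolding tour_edges_def using i by auto
    have e': "{?b, ?a} \<in> tour_edges T'" using e by (simp add: insert_commute)
    have inT: "p1 \<in> set T'" "p2 \<in> set T'" "p3 \<in> set T'" using s unfolding Xs_def by auto
    have c1: "\<not>(?a = xo \<and> ?b \<in> {q1,q2,q3})"
    proof
      assume h: "?a = xo \<and> ?b \<in> {q1,q2,q3}"
      show False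
      proof (cases "?b = q1")
        case True thus False using blocked[OF nc e inT(1)] h on_segs(1) by simp
      next
        case F1: False
        show False
        proof (cases "?b = q2")
          case True thus False using blocked[OF nc e inT(2)] h on_segs(2) by simp
        next
          case False hence "?b = q3" using h F1 by simp
          thus False using blocked[OF nc e inT(3)] h on_segs(3) by simp
        qed
      qed
    qed
    have c2: "\<not>(?b = xo \<and> ?a \<in> {q1,q2,q3})"
    proof
      assume h: "?b = xo \<and> ?a \<in> {q1,q2,q3}"
      show False
      proof (cases "?a = q1")
        case True thus False using blocked[OF nc e' inT(1)] h on_segs(1) by simp
      next
        case F1: False
        show False
        proof (cases "?a = q2")
          case True thus False using blocked[OF nc e' inT(2)] h on_segs(2) by simp
        next
          case False hence "?a = q3" using h F1 by simp
          thus False using blocked[OF nc e' inT(3)] h on_segs(3) by simp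
        qed
      qed
    qed
    show ?thesis by (rule edge_bound[OF a b ab c1 c2])
  qed
  have "tour_length T' = (\<Sum>i<?n. dist (T'!i) (T'!((i+1) mod ?n)))"
    by (rule tour_length_eq[OF d l3])
  also have "\<dots> \<le> (\<Sum>i<?n. W (T'!i) + W (T'!((i+1) mod ?n)) + 2)"
    by (rule sum_mono) (use bound in auto)
  also have "\<dots> = (\<Sum>i<?n. W (T'!i)) + (\<Sum>i<?n. W (T'!((i+1) mod ?n))) + 2 * ?n"
    by (simp add: sum.distrib)
  also have "\<dots> = sum W Xs + sum W Xs + 14"
    using sum_nth_set[OF d, of W] sum_shift[OF d, of W] s n7 by simp
  finally show ?thesis using sum_W by simp
qed



definition TT :: "(real^2) list" where "TT = [p1,q1,p2,q2,p3,q3]"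
lemma edges_TT: "tour_edges TT = {{p1,q1}, {q1,p2}, {p2,q2}, {q2,p3}, {p3,q3}, {q3,p1}}"
proof -
  have u: "{..<6::nat} = {0,1,2,3,4,5}" by auto
  have l: "length TT = 6" by (simp add: TT_def)
  have "tour_edges TT = (\<lambda>i. {TT!i, TT!((i+1) mod 6)}) ` {0,1,2,3,4,5}"
    unfolding tour_edges_image l u by simp
  also have "\<dots> = {{p1,q1}, {q1,p2}, {p2,q2}, {q2,p3}, {p3,q3}, {q3,p1}}" by (simp add: TT_def)
  finally show ?thesis .
qed
lemma nc_1_2: "seg {p1,q1} \<inter> seg {q1,p2} \<subseteq> {p1,q1} \<inter> {q1,p2}"
proof -
  have h1: "seg {p1,q1} = closed_segment q1 p1" by (simp add: seg_pair closed_segment_commute)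
  have h2: "seg {q1,p2} = closed_segment q1 p2" by (simp add: seg_pair closed_segment_commute)
  have "closed_segment q1 p1 \<inter> closed_segment q1 p2 \<subseteq> {q1}" by (rule adj) simp
  thus ?thesis unfolding h1 h2 by auto
qed
lemma nc_1_3: "seg {p1,q1} \<inter> seg {p2,q2} \<subseteq> {p1,q1} \<inter> {p2,q2}"
proof -
  have "closed_segment p1 q1 \<inter> closed_segment p2 q2 = {}" by (rule sep[where wa="(-3)" and wb="0" and k="(-3)/2"]) simp_all
  thus ?thesis by (simp add: seg_pair)
qed
lemma nc_1_4: "seg {p1,q1} \<inter> seg {q2,p3} \<subseteq> {p1,q1} \<inter> {q2,p3}"
proof -
  have "closed_segment p1 q1 \<inter> closed_segment q2 p3 = {}" by (rule sep[where wa="(-3)" and wb="0" and k="(-3)/2"]) simp_all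
  thus ?thesis by (simp add: seg_pair)
qed
lemma nc_1_5: "seg {p1,q1} \<inter> seg {p3,q3} \<subseteq> {p1,q1} \<inter> {p3,q3}"
proof -
  have "closed_segment p1 q1 \<inter> closed_segment p3 q3 = {}" by (rule sep[where wa="(-3)" and wb="(-3)" and k="3/2"]) simp_all
  thus ?thesis by (simp add: seg_pair)
qed
lemma nc_1_6: "seg {p1,q1} \<inter> seg {q3,p1} \<subseteq> {p1,q1} \<inter> {q3,p1}"
proof -
  have h1: "seg {p1,q1} = closed_segment p1 q1" by (simp add: seg_pair closed_segment_commute)
  have h2: "seg {q3,p1} = closed_segment p1 q3" by (simp add: seg_pair closed_segment_commute)
  have "closed_segment p1 q1 \<inter> closed_segment p1 q3 \<subseteq> {p1}" by (rule adj) simp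
  thus ?thesis unfolding h1 h2 by auto
qed
lemma nc_2_1: "seg {q1,p2} \<inter> seg {p1,q1} \<subseteq> {q1,p2} \<inter> {p1,q1}"
proof -
  have h1: "seg {q1,p2} = closed_segment q1 p2" by (simp add: seg_pair closed_segment_commute)
  have h2: "seg {p1,q1} = closed_segment q1 p1" by (simp add: seg_pair closed_segment_commute)
  have "closed_segment q1 p2 \<inter> closed_segment q1 p1 \<subseteq> {q1}" by (rule adj) simp
  thus ?thesis unfolding h1 h2 by auto
qed
lemma nc_2_3: "seg {q1,p2} \<inter> seg {p2,q2} \<subseteq> {q1,p2} \<inter> {p2,q2}"
proof -
  have h1: "seg {q1,p2} = closed_segment p2 q1" by (simp add: seg_pair closed_segment_commute)
  have h2: "seg {p2,q2} = closed_segment p2 q2" by (simp add: seg_pair closed_segment_commute)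
  have "closed_segment p2 q1 \<inter> closed_segment p2 q2 \<subseteq> {p2}" by (rule adj) simp
  thus ?thesis unfolding h1 h2 by auto
qed
lemma nc_2_4: "seg {q1,p2} \<inter> seg {q2,p3} \<subseteq> {q1,p2} \<inter> {q2,p3}"
proof -
  have "closed_segment q1 p2 \<inter> closed_segment q2 p3 = {}" by (rule sep[where wa="(-3)" and wb="1" and k="3/2"]) simp_all
  thus ?thesis by (simp add: seg_pair)
qed
lemma nc_2_5: "seg {q1,p2} \<inter> seg {p3,q3} \<subseteq> {q1,p2} \<inter> {p3,q3}"
proof -
  have "closed_segment q1 p2 \<inter> closed_segment p3 q3 = {}" by (rule sep[where wa="(-3)" and wb="(-3)" and k="3/2"]) simp_all
  thus ?thesis by (simp add: seg_pair)
qed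
lemma nc_2_6: "seg {q1,p2} \<inter> seg {q3,p1} \<subseteq> {q1,p2} \<inter> {q3,p1}"
proof -
  have "closed_segment q1 p2 \<inter> closed_segment q3 p1 = {}" by (rule sep[where wa="(-2)" and wb="(-3)" and k="(-5)/2"]) simp_all
  thus ?thesis by (simp add: seg_pair)
qed
lemma nc_3_1: "seg {p2,q2} \<inter> seg {p1,q1} \<subseteq> {p2,q2} \<inter> {p1,q1}"
proof -
  have "closed_segment p2 q2 \<inter> closed_segment p1 q1 = {}" by (rule sep[where wa="0" and wb="(-3)" and k="(-3)/2"]) simp_all
  thus ?thesis by (simp add: seg_pair)
qed
lemma nc_3_2: "seg {p2,q2} \<inter> seg {q1,p2} \<subseteq> {p2,q2} \<inter> {q1,p2}"
proof -
  have h1: "seg {p2,q2} = closed_segment p2 q2" by (simp add: seg_pair closed_segment_commute)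
  have h2: "seg {q1,p2} = closed_segment p2 q1" by (simp add: seg_pair closed_segment_commute)
  have "closed_segment p2 q2 \<inter> closed_segment p2 q1 \<subseteq> {p2}" by (rule adj) simp
  thus ?thesis unfolding h1 h2 by auto
qed
lemma nc_3_4: "seg {p2,q2} \<inter> seg {q2,p3} \<subseteq> {p2,q2} \<inter> {q2,p3}"
proof -
  have h1: "seg {p2,q2} = closed_segment q2 p2" by (simp add: seg_pair closed_segment_commute)
  have h2: "seg {q2,p3} = closed_segment q2 p3" by (simp add: seg_pair closed_segment_commute)
  have "closed_segment q2 p2 \<inter> closed_segment q2 p3 \<subseteq> {q2}" by (rule adj) simp
  thus ?thesis unfolding h1 h2 by auto
qed
lemma nc_3_5: "seg {p2,q2} \<inter> seg {p3,q3} \<subseteq> {p2,q2} \<inter> {p3,q3}"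
proof -
  have "closed_segment p2 q2 \<inter> closed_segment p3 q3 = {}" by (rule sep[where wa="(-3)" and wb="(-3)" and k="3/2"]) simp_all
  thus ?thesis by (simp add: seg_pair)
qed
lemma nc_3_6: "seg {p2,q2} \<inter> seg {q3,p1} \<subseteq> {p2,q2} \<inter> {q3,p1}"
proof -
  have "closed_segment p2 q2 \<inter> closed_segment q3 p1 = {}" by (rule sep[where wa="(-2)" and wb="(-3)" and k="(-5)/2"]) simp_all
  thus ?thesis by (simp add: seg_pair)
qed
lemma nc_4_1: "seg {q2,p3} \<inter> seg {p1,q1} \<subseteq> {q2,p3} \<inter> {p1,q1}"
proof -
  have "closed_segment q2 p3 \<inter> closed_segment p1 q1 = {}" by (rule sep[where wa="1" and wb="(-1)" and k="1/2"]) simp_all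
  thus ?thesis by (simp add: seg_pair)
qed
lemma nc_4_2: "seg {q2,p3} \<inter> seg {q1,p2} \<subseteq> {q2,p3} \<inter> {q1,p2}"
proof -
  have "closed_segment q2 p3 \<inter> closed_segment q1 p2 = {}" by (rule sep[where wa="3" and wb="(-1)" and k="(-3)/2"]) simp_all
  thus ?thesis by (simp add: seg_pair)
qed
lemma nc_4_3: "seg {q2,p3} \<inter> seg {p2,q2} \<subseteq> {q2,p3} \<inter> {p2,q2}"
proof -
  have h1: "seg {q2,p3} = closed_segment q2 p3" by (simp add: seg_pair closed_segment_commute)
  have h2: "seg {p2,q2} = closed_segment q2 p2" by (simp add: seg_pair closed_segment_commute)
  have "closed_segment q2 p3 \<inter> closed_segment q2 p2 \<subseteq> {q2}" by (rule adj) simp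
  thus ?thesis unfolding h1 h2 by auto
qed
lemma nc_4_5: "seg {q2,p3} \<inter> seg {p3,q3} \<subseteq> {q2,p3} \<inter> {p3,q3}"
proof -
  have h1: "seg {q2,p3} = closed_segment p3 q2" by (simp add: seg_pair closed_segment_commute)
  have h2: "seg {p3,q3} = closed_segment p3 q3" by (simp add: seg_pair closed_segment_commute)
  have "closed_segment p3 q2 \<inter> closed_segment p3 q3 \<subseteq> {p3}" by (rule adj) simp
  thus ?thesis unfolding h1 h2 by auto
qed
lemma nc_4_6: "seg {q2,p3} \<inter> seg {q3,p1} \<subseteq> {q2,p3} \<inter> {q3,p1}"
proof -
  have "closed_segment q2 p3 \<inter> closed_segment q3 p1 = {}" by (rule sep[where wa="2" and wb="(-3)" and k="3/2"]) simp_all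
  thus ?thesis by (simp add: seg_pair)
qed
lemma nc_5_1: "seg {p3,q3} \<inter> seg {p1,q1} \<subseteq> {p3,q3} \<inter> {p1,q1}"
proof -
  have "closed_segment p3 q3 \<inter> closed_segment p1 q1 = {}" by (rule sep[where wa="0" and wb="1" and k="(-1)/2"]) simp_all
  thus ?thesis by (simp add: seg_pair)
qed
lemma nc_5_2: "seg {p3,q3} \<inter> seg {q1,p2} \<subseteq> {p3,q3} \<inter> {q1,p2}"
proof -
  have "closed_segment p3 q3 \<inter> closed_segment q1 p2 = {}" by (rule sep[where wa="0" and wb="1" and k="(-1)/2"]) simp_all
  thus ?thesis by (simp add: seg_pair)
qed
lemma nc_5_3: "seg {p3,q3} \<inter> seg {p2,q2} \<subseteq> {p3,q3} \<inter> {p2,q2}"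
proof -
  have "closed_segment p3 q3 \<inter> closed_segment p2 q2 = {}" by (rule sep[where wa="(-3)" and wb="3" and k="3/2"]) simp_all
  thus ?thesis by (simp add: seg_pair)
qed
lemma nc_5_4: "seg {p3,q3} \<inter> seg {q2,p3} \<subseteq> {p3,q3} \<inter> {q2,p3}"
proof -
  have h1: "seg {p3,q3} = closed_segment p3 q3" by (simp add: seg_pair closed_segment_commute)
  have h2: "seg {q2,p3} = closed_segment p3 q2" by (simp add: seg_pair closed_segment_commute)
  have "closed_segment p3 q3 \<inter> closed_segment p3 q2 \<subseteq> {p3}" by (rule adj) simp
  thus ?thesis unfolding h1 h2 by auto
qed
lemma nc_5_6: "seg {p3,q3} \<inter> seg {q3,p1} \<subseteq> {p3,q3} \<inter> {q3,p1}"
proof -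
  have h1: "seg {p3,q3} = closed_segment q3 p3" by (simp add: seg_pair closed_segment_commute)
  have h2: "seg {q3,p1} = closed_segment q3 p1" by (simp add: seg_pair closed_segment_commute)
  have "closed_segment q3 p3 \<inter> closed_segment q3 p1 \<subseteq> {q3}" by (rule adj) simp
  thus ?thesis unfolding h1 h2 by auto
qed
lemma nc_6_1: "seg {q3,p1} \<inter> seg {p1,q1} \<subseteq> {q3,p1} \<inter> {p1,q1}"
proof -
  have h1: "seg {q3,p1} = closed_segment p1 q3" by (simp add: seg_pair closed_segment_commute)
  have h2: "seg {p1,q1} = closed_segment p1 q1" by (simp add: seg_pair closed_segment_commute)
  have "closed_segment p1 q3 \<inter> closed_segment p1 q1 \<subseteq> {p1}" by (rule adj) simp
  thus ?thesis unfolding h1 h2 by auto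
qed
lemma nc_6_2: "seg {q3,p1} \<inter> seg {q1,p2} \<subseteq> {q3,p1} \<inter> {q1,p2}"
proof -
  have "closed_segment q3 p1 \<inter> closed_segment q1 p2 = {}" by (rule sep[where wa="1" and wb="2" and k="3/2"]) simp_all
  thus ?thesis by (simp add: seg_pair)
qed
lemma nc_6_3: "seg {q3,p1} \<inter> seg {p2,q2} \<subseteq> {q3,p1} \<inter> {p2,q2}"
proof -
  have "closed_segment q3 p1 \<inter> closed_segment p2 q2 = {}" by (rule sep[where wa="(-3)" and wb="3" and k="3/2"]) simp_all
  thus ?thesis by (simp add: seg_pair)
qed
lemma nc_6_4: "seg {q3,p1} \<inter> seg {q2,p3} \<subseteq> {q3,p1} \<inter> {q2,p3}"
proof -
  have "closed_segment q3 p1 \<inter> closed_segment q2 p3 = {}" by (rule sep[where wa="(-2)" and wb="3" and k="(-3)/2"]) simp_all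
  thus ?thesis by (simp add: seg_pair)
qed
lemma nc_6_5: "seg {q3,p1} \<inter> seg {p3,q3} \<subseteq> {q3,p1} \<inter> {p3,q3}"
proof -
  have h1: "seg {q3,p1} = closed_segment q3 p1" by (simp add: seg_pair closed_segment_commute)
  have h2: "seg {p3,q3} = closed_segment q3 p3" by (simp add: seg_pair closed_segment_commute)
  have "closed_segment q3 p1 \<inter> closed_segment q3 p3 \<subseteq> {q3}" by (rule adj) simp
  thus ?thesis unfolding h1 h2 by auto
qed
lemmas nc_all = nc_1_2 nc_1_3 nc_1_4 nc_1_5 nc_1_6 nc_2_1 nc_2_3 nc_2_4 nc_2_5 nc_2_6 nc_3_1 nc_3_2 nc_3_4 nc_3_5 nc_3_6 nc_4_1 nc_4_2 nc_4_3 nc_4_5 nc_4_6 nc_5_1 nc_5_2 nc_5_3 nc_5_4 nc_5_6 nc_6_1 nc_6_2 nc_6_3 nc_6_4 nc_6_5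

lemma nc_TT: "noncrossing TT"
  unfolding noncrossing_def edges_TT
  apply (intro ballI impI)
  apply (simp only: insert_iff empty_iff)
  by (elim disjE FalseE; simp only: nc_all; simp)

lemma lower_d: "dist p1 q1 \<ge> 999" "dist q1 p2 \<ge> 1000" "dist p2 q2 \<ge> 999" "dist q2 p3 \<ge> 1001"
  "dist p3 q3 \<ge> 1412" "dist q3 p1 \<ge> 1414"
  by (simp_all add: dist2 sqrt_ge_helper power2_eq_square)

lemma len_TT: "tour_length TT = dist p1 q1 + dist q1 p2 + dist p2 q2 + dist q2 p3 + dist p3 q3 + dist q3 p1"
proof -
  have u: "{..<6::nat} = {0,1,2,3,4,5}" by auto
  have l: "length TT = 6" by (simp add: TT_def)
  have "tour_length TT = (\<Sum>i<length TT. dist (TT!i) (TT!((i+1) mod length TT)))"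
    by (rule tour_length_eq) (simp_all add: TT_def)
  also have "\<dots> = dist p1 q1 + dist q1 p2 + dist p2 q2 + dist q2 p3 + dist p3 q3 + dist q3 p1"
    unfolding l u by (simp add: TT_def)
  finally show ?thesis .
qed

lemma TT_long: "tour_length TT \<ge> 6825"
  using lower_d unfolding len_TT by linarith


theorem theorem2:
  shows "\<exists>(X :: point set) x T. finite X \<and> x \<in> X \<and>
           is_tour (X - {x}) T \<and> noncrossing T \<and>
           (\<forall>T'. is_tour X T' \<and> noncrossing T' \<longrightarrow> tour_length T' < tour_length T)"
proof (intro exI conjI allI impI)
  show "finite Xs" unfolding Xs_def by simp
  show "xo \<in> Xs" unfolding Xs_def by simp
  have s: "set TT = Xs - {xo}" unfolding Xs_def TT_def by auto
  show "is_tour (Xs - {xo}) TT" unfolding is_tour_def using s by (simp add: TT_def)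
  show "noncrossing TT" by (rule nc_TT)
  fix T' assume "is_tour Xs T' \<and> noncrossing T'"
  hence "tour_length T' \<le> 6670" using upper by blast
  thus "tour_length T' < tour_length TT" using TT_long by linarith
qed


end
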